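(* Let $U$ be a closed convex set in $D$. Then: (1) $\psi_U$ is an orientation-preserving homeomorphism of $S^1$; (2) if $V$ is a closed convex set in $D$ with $V\subset U$, then $\rho(\psi_U)\leq\rho(\psi_V)$; (3) $\rho(\psi_U)\leq\frac12$.
   Context: $D$ is the open unit disk in $\mathbb R^2$, $S^1$ its boundary circle identified with $\mathbb R/\mathbb Z$ via the counterclockwise normalized angle. For a closed convex $U\subset D$ and $v\in S^1$, $\psi_U(v)$ is the point $w\in S^1\setminus\{v\}$ such that the line $vw$ meets $U$ and $U$ lies in the closed half-plane to the left of the directed line from $v$ to $w$ (the first point counterclockwise from $v$ whose chord from $v$ is tangent to $U$). For an orientation-preserving homeomorphism $f$ of $S^1$, $\rho(f)=\lim_{n\to\infty}(\overline f^n(x)-x)/n$ with $\overline f$ the lift to $\mathbb R$ satisfying $\overline f(0)\in[0,1)$. *)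

theory Defs
  imports "HOL-Analysis.Analysis"
begin

text \<open>The plane is modelled by the complex numbers; D = ball 0 1, S^1 = sphere 0 1,
  identified with R/Z via the normalized angle t |-> circ t.\<close>

definition circ :: "real \<Rightarrow> complex" where
  "circ t = cis (2 * pi * t)"

definition left_of :: "complex \<Rightarrow> complex \<Rightarrow> complex \<Rightarrow> bool" where
  "left_of v w p \<longleftrightarrow> Im (cnj (w - v) * (p - v)) \<ge> 0"

definition line_through :: "complex \<Rightarrow> complex \<Rightarrow> complex set" where
  "line_through v w = {v + of_real t * (w - v) | t. True}"

definition psi :: "complex set \<Rightarrow> complex \<Rightarrow> complex" where
  "psi U v = (THE w. w \<in> sphere 0 1 \<and> w \<noteq> v \<and> line_through v w \<inter> U \<noteq> {}
                    \<and> (\<forall>p\<in>U. left_of v w p))"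

definition orient_pres_homeo :: "(complex \<Rightarrow> complex) \<Rightarrow> bool" where
  "orient_pres_homeo f \<longleftrightarrow>
     (\<exists>g. homeomorphism (sphere 0 1) (sphere 0 1) f g) \<and>
     (\<exists>F::real \<Rightarrow> real. continuous_on UNIV F \<and> strict_mono F \<and>
        (\<forall>t. F (t + 1) = F t + 1) \<and> (\<forall>t. f (circ t) = circ (F t)))"

definition lift_of :: "(complex \<Rightarrow> complex) \<Rightarrow> real \<Rightarrow> real" where
  "lift_of f = (THE F. continuous_on UNIV F \<and> (\<forall>t. f (circ t) = circ (F t))
                        \<and> 0 \<le> F 0 \<and> F 0 < 1)"

definition rot_num :: "(complex \<Rightarrow> complex) \<Rightarrow> real" where
  "rot_num f = lim (\<lambda>n. (((lift_of f) ^^ n) 0 - 0) / real n)"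

end

theory Submission
  imports Defs
begin


lemma circ_add: "circ (a + b) = circ a * circ b"
  by (simp add: circ_def cis_mult distrib_left)

lemma circ_1: "circ 1 = 1" by (simp add: circ_def)

lemma circ_per: "circ (t + 1) = circ t"
  by (simp add: circ_add circ_1)

lemma norm_circ [simp]: "norm (circ t) = 1" by (simp add: circ_def)

lemma circ_ne_1: assumes "0 < t" "t < 1" shows "circ t \<noteq> 1"
proof
  assume "circ t = 1"
  then have "cos (2*pi*t) = 1" unfolding circ_def by (metis Re_complex_of_real cis.sel(1) one_complex.sel(1))
  from cos_one_2pi_int[THEN iffD1, OF this] obtain n :: int where n: "2*pi*t = real_of_int n * 2 * pi" by blast
  then have "t = n" by simp
  with assms have "0 < n" "n < 1" by simp_all
  then show False by linarith
qed

lemma circ_eq_int: assumes "circ a = circ b" shows "\<exists>k::int. a = b + k"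
proof -
  have e: "circ (a - b) * circ b = 1 * circ b" using assms circ_add[of "a-b" b] by simp
  have "circ b \<noteq> 0" using norm_circ[of b] by (metis norm_zero zero_neq_one)
  then have "circ (a - b) = 1" using e mult_cancel_right by blast
  then have "cos (2*pi*(a-b)) = 1" unfolding circ_def by (metis Re_complex_of_real cis.sel(1) one_complex.sel(1))
  from cos_one_2pi_int[THEN iffD1, OF this] obtain n :: int where n: "2*pi*(a-b) = real_of_int n * 2 * pi" by blast
  then have "a - b = n" by simp
  then show ?thesis by (intro exI[of _ n]) simp
qed

lemma unit_circ: assumes "norm u = 1" shows "\<exists>\<theta>. 0 \<le> \<theta> \<and> \<theta> < 1 \<and> u = circ \<theta>"
proof -
  define \<theta> where "\<theta> = Arg2pi u / (2*pi)"
  have "0 \<le> \<theta>" "\<theta> < 1" using Arg2pi_ge_0[of u] Arg2pi_lt_2pi[of u] by (auto simp: \<theta>_def field_simps)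
  moreover have "circ \<theta> = u" using assms complex_norm_eq_1_exp[of u]
    by (simp add: circ_def \<theta>_def cis_conv_exp)
  ultimately show ?thesis by blast
qed

definition Phi :: "complex \<Rightarrow> real" where
  "Phi q = 1/2 - arctan (Im q / (1 - Re q)) / pi"

lemma Phi_range: "0 < Phi q \<and> Phi q < 1"
  using arctan_lbound[of "Im q / (1 - Re q)"] arctan_ubound[of "Im q / (1 - Re q)"] pi_gt_zero
  unfolding Phi_def by (auto simp: field_simps)

lemma Im_formula:
  "Im (cnj (circ \<theta> - 1) * (q - 1)) = 2 * sin (pi*\<theta>) * (cos (pi*\<theta>) * (1 - Re q) - sin (pi*\<theta>) * Im q)"
proof -
  define x where "x = pi*\<theta>"
  have ci: "circ \<theta> = cis (2*x)" by (simp add: circ_def x_def mult.assoc)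
  have "Im (cnj (circ \<theta> - 1) * (q - 1)) = (cos (2*x) - 1) * Im q - sin (2*x) * (Re q - 1)"
    unfolding ci by simp
  also have "\<dots> = ((cos x)\<^sup>2 - (sin x)\<^sup>2 - 1) * Im q - 2 * sin x * cos x * (Re q - 1)"
    by (simp only: cos_double sin_double)
  also have "\<dots> = 2 * sin x * (cos x * (1 - Re q) - sin x * Im q)"
    unfolding cos_squared_eq by (simp add: algebra_simps power2_eq_square)
  finally show ?thesis by (simp add: x_def)
qed

lemma K0:
  assumes "norm q < 1" "0 < \<theta>" "\<theta> < 1"
  shows "(Im (cnj (circ \<theta> - 1) * (q - 1)) \<ge> 0 \<longleftrightarrow> \<theta> \<le> Phi q) \<and>
         (Im (cnj (circ \<theta> - 1) * (q - 1)) = 0 \<longleftrightarrow> \<theta> = Phi q)"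
proof -
  define d where "d = 1 - Re q"
  have d: "d > 0" using assms(1) abs_Re_le_cmod[of q] unfolding d_def by linarith
  define \<alpha> where "\<alpha> = arctan (Im q / d)"
  have ca: "cos \<alpha> > 0" unfolding \<alpha>_def using arctan_lbound arctan_ubound cos_gt_zero_pi by blast
  have ta: "sin \<alpha> / cos \<alpha> = Im q / d" unfolding \<alpha>_def using tan_arctan by (simp add: tan_def)
  have sp: "sin (pi*\<theta>) > 0" using assms by (intro sin_gt_zero) auto
  have iq: "Im q = d * sin \<alpha> / cos \<alpha>" using ta d ca by (simp add: field_simps)
  have "(d / cos \<alpha>) * cos (pi*\<theta> + \<alpha>) = (d / cos \<alpha>) * (cos (pi*\<theta>) * cos \<alpha> - sin (pi*\<theta>) * sin \<alpha>)"
    by (simp add: cos_add)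
  also have "\<dots> = cos (pi*\<theta>) * d - sin (pi*\<theta>) * (d * sin \<alpha> / cos \<alpha>)"
    using ca by (simp add: field_simps)
  finally have "cos (pi*\<theta>) * d - sin (pi*\<theta>) * Im q = (d / cos \<alpha>) * cos (pi*\<theta> + \<alpha>)"
    using iq by simp
  then have E: "Im (cnj (circ \<theta> - 1) * (q - 1)) = (2 * sin (pi*\<theta>) * (d / cos \<alpha>)) * cos (pi*\<theta> + \<alpha>)"
    using Im_formula[of \<theta> q] unfolding d_def by simp
  have pos: "2 * sin (pi*\<theta>) * (d / cos \<alpha>) > 0" using sp d ca by simp
  have P: "Phi q = 1/2 - \<alpha>/pi" unfolding Phi_def \<alpha>_def d_def by simp
  have b1: "-(pi/2) < \<alpha>" "\<alpha> < pi/2" unfolding \<alpha>_def using arctan_lbound arctan_ubound by auto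
  have iff1: "\<theta> \<le> Phi q \<longleftrightarrow> pi*\<theta> + \<alpha> \<le> pi/2" unfolding P using pi_gt_zero
    by (simp add: field_simps)
  have iff2: "\<theta> = Phi q \<longleftrightarrow> pi*\<theta> + \<alpha> = pi/2" unfolding P using pi_gt_zero
    by (auto simp add: field_simps)
  have "0 < pi*\<theta>" using assms pi_gt_zero by simp
  then have lo: "-(pi/2) < pi*\<theta> + \<alpha>" using b1 by simp
  have "pi*\<theta> < pi * 1" using assms pi_gt_zero by (intro mult_strict_left_mono) auto
  then have hi: "pi*\<theta> + \<alpha> < 3*pi/2" using b1 by linarith
  consider "pi*\<theta> + \<alpha> < pi/2" | "pi*\<theta> + \<alpha> = pi/2" | "pi*\<theta> + \<alpha> > pi/2" by linarith
  then show ?thesis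
  proof cases
    case 1
    then have "cos (pi*\<theta> + \<alpha>) > 0" using lo cos_gt_zero_pi by blast
    then have "Im (cnj (circ \<theta> - 1) * (q - 1)) > 0" unfolding E using pos by (rule mult_pos_pos[rotated])
    then show ?thesis using 1 iff1 iff2 by auto
  next
    case 2
    then have "cos (pi*\<theta> + \<alpha>) = 0" by (simp only: cos_pi_half)
    then have "Im (cnj (circ \<theta> - 1) * (q - 1)) = 0" unfolding E by simp
    then show ?thesis using 2 iff1 iff2 by simp
  next
    case 3
    have "cos (pi*\<theta> + \<alpha> - pi) > 0" using 3 hi by (intro cos_gt_zero_pi) auto
    then have "cos (pi*\<theta> + \<alpha>) < 0" by (simp add: cos_diff)
    then have "Im (cnj (circ \<theta> - 1) * (q - 1)) < 0" unfolding E using pos by (rule mult_pos_neg[rotated])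
    then show ?thesis using 3 iff1 iff2 by auto
  qed
qed




definition phi :: "complex \<Rightarrow> complex \<Rightarrow> real" where
  "phi z p = Phi (cnj z * p)"

lemma phi_range: "0 < phi z p" "phi z p < 1"
  using Phi_range unfolding phi_def by auto

lemma cnj_z_z: "norm z = 1 \<Longrightarrow> cnj z * z = 1"
  using complex_norm_square[of z] by (simp add: mult.commute)

lemma Lz: assumes "norm z = 1"
  shows "Im (cnj (z * circ \<theta> - z) * (p - z)) = Im (cnj (circ \<theta> - 1) * (cnj z * p - 1))"
proof -
  have zz: "cnj z * z = 1" using cnj_z_z[OF assms] .
  have "cnj (z * circ \<theta> - z) * (p - z) = cnj (circ \<theta> - 1) * (cnj z * p - cnj z * z)"
    by (simp add: algebra_simps)
  then show ?thesis using zz by simp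
qed

lemma K:
  assumes "norm z = 1" "norm p < 1" "0 < \<theta>" "\<theta> < 1"
  shows "(Im (cnj (z * circ \<theta> - z) * (p - z)) \<ge> 0 \<longleftrightarrow> \<theta> \<le> phi z p) \<and>
         (Im (cnj (z * circ \<theta> - z) * (p - z)) = 0 \<longleftrightarrow> \<theta> = phi z p)"
proof -
  have "norm (cnj z * p) < 1" using assms by (simp add: norm_mult)
  then show ?thesis unfolding Lz[OF assms(1)] phi_def using K0 assms(3,4) by blast
qed

lemma on_line: assumes "a \<noteq> 0" "Im (cnj a * b) = 0" shows "\<exists>r::real. b = of_real r * a"
proof -
  define c where "c = cnj a * b"
  have c: "c = of_real (Re c)" using assms(2) unfolding c_def by (simp add: complex_eq_iff)
  have "a * c = (a * cnj a) * b" unfolding c_def by (simp add: algebra_simps)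
  also have "a * cnj a = of_real ((norm a)\<^sup>2)" using complex_norm_square[of a] by simp
  finally have e: "of_real ((norm a)\<^sup>2) * b = a * of_real (Re c)" using c by simp
  have n: "(norm a)\<^sup>2 \<noteq> 0" using assms(1) by simp
  have "b = of_real (Re c / (norm a)\<^sup>2) * a"
    using e n by (simp add: field_simps)
  then show ?thesis by blast
qed

lemma Im_line: "Im (cnj a * (of_real r * a)) = 0"
  by (simp add: algebra_simps)

lemma involution:
  assumes "norm z = 1" "norm p < 1"
  shows "phi (z * circ (phi z p)) p = 1 - phi z p"
proof -
  define \<theta> where "\<theta> = phi z p"
  define w where "w = z * circ \<theta>"
  have th: "0 < \<theta>" "\<theta> < 1" using phi_range unfolding \<theta>_def by auto
  have nw: "norm w = 1" unfolding w_def using assms by (simp add: norm_mult)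
  have "Im (cnj (z * circ \<theta> - z) * (p - z)) = 0 \<longleftrightarrow> \<theta> = phi z p" using K[OF assms th] by blast
  then have L1: "Im (cnj (w - z) * (p - z)) = 0" unfolding w_def \<theta>_def by blast
  have wz: "w * circ (1 - \<theta>) = z" unfolding w_def
    by (simp add: mult.assoc circ_add[symmetric] circ_1)
  have "Im (cnj (w * circ (1 - \<theta>) - w) * (p - w)) = Im (cnj (z - w) * (p - w))" using wz by simp
  also have "\<dots> = - Im (cnj (w - z) * (p - z))" by (simp add: algebra_simps)
  finally have "Im (cnj (w * circ (1 - \<theta>) - w) * (p - w)) = 0" using L1 by simp
  then have "1 - \<theta> = phi w p" using K[OF nw assms(2), of "1 - \<theta>"] th by simp
  then show ?thesis unfolding w_def \<theta>_def by simp
qed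

lemma continuous_on_Phi: "continuous_on (ball 0 1) Phi"
proof -
  have "\<forall>q\<in>ball 0 1. 1 - Re q \<noteq> 0"
    using abs_Re_le_cmod by (smt (verit) mem_ball_0)
  then show ?thesis unfolding Phi_def by (intro continuous_intros) auto
qed

lemma continuous_circ: "continuous_on UNIV circ"
  unfolding circ_def cis_conv_exp by (intro continuous_intros)

definition Fp :: "complex \<Rightarrow> real \<Rightarrow> real" where
  "Fp p t = t + phi (circ t) p"

lemma Fp_cont: assumes "norm p < 1" shows "continuous_on UNIV (Fp p)"
proof -
  have c1: "continuous_on UNIV (\<lambda>t. cnj (circ t) * p)"
    using continuous_circ by (intro continuous_intros) auto
  have "(\<lambda>t. cnj (circ t) * p) ` UNIV \<subseteq> ball 0 1" using assms by (auto simp: norm_mult)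
  then have "continuous_on UNIV (\<lambda>t. Phi (cnj (circ t) * p))"
    using continuous_on_compose2[OF continuous_on_Phi c1] by auto
  then show ?thesis unfolding Fp_def phi_def by (intro continuous_intros)
qed

lemma Fp_per: "Fp p (t + 1) = Fp p t + 1"
  unfolding Fp_def by (simp add: circ_per)

lemma Fp_inv: assumes "norm p < 1" shows "Fp p (Fp p t) = t + 1"
proof -
  have "circ (Fp p t) = circ t * circ (phi (circ t) p)" unfolding Fp_def by (simp add: circ_add)
  then have "phi (circ (Fp p t)) p = 1 - phi (circ t) p" using involution[OF norm_circ assms] by simp
  then show ?thesis unfolding Fp_def[of p "Fp p t"] by (simp add: Fp_def)
qed

lemma Fp_mono: assumes "norm p < 1" shows "strict_mono (Fp p)"
proof (rule strict_monoI)
  fix a b :: real assume ab: "a < b"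
  have inj: "inj (Fp p)" by (rule injI) (metis Fp_inv[OF assms] add_right_cancel)
  have "(Fp p a < Fp p b \<and> Fp p b < Fp p (b+1)) \<or> (Fp p (b+1) < Fp p b \<and> Fp p b < Fp p a)"
    using ab by (intro continuous_inj_imp_mono continuous_on_subset[OF Fp_cont[OF assms]]
        inj_on_subset[OF inj]) auto
  then show "Fp p a < Fp p b" using Fp_per[of p b] by auto
qed




definition M :: "complex set \<Rightarrow> complex \<Rightarrow> real" where
  "M U z = Inf ((\<lambda>p. phi z p) ` U)"

lemma phi_cont_U:
  assumes "U \<subseteq> ball 0 1" "norm z = 1"
  shows "continuous_on U (phi z)"
proof -
  have c1: "continuous_on U (\<lambda>p. cnj z * p)" by (intro continuous_intros)
  have "(\<lambda>p. cnj z * p) ` U \<subseteq> ball 0 1" using assms by (auto simp: norm_mult)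
  then show ?thesis unfolding phi_def[abs_def]
    using continuous_on_compose2[OF continuous_on_Phi c1] by auto
qed

lemma M_attained:
  assumes "compact U" "U \<noteq> {}" "U \<subseteq> ball 0 1" "norm z = 1"
  shows "\<exists>p\<in>U. M U z = phi z p \<and> (\<forall>p'\<in>U. phi z p \<le> phi z p')"
proof -
  obtain p where p: "p \<in> U" "\<forall>y\<in>U. phi z p \<le> phi z y"
    using continuous_attains_inf[OF assms(1,2) phi_cont_U[OF assms(3,4)]] by blast
  have "M U z = phi z p" unfolding M_def using p by (intro cInf_eq_minimum) auto
  then show ?thesis using p by blast
qed

lemma M_le:
  assumes "compact U" "U \<noteq> {}" "U \<subseteq> ball 0 1" "norm z = 1" "p \<in> U"
  shows "M U z \<le> phi z p"
  using M_attained[OF assms(1-4)] assms(5) by auto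

lemma M_range:
  assumes "compact U" "U \<noteq> {}" "U \<subseteq> ball 0 1" "norm z = 1"
  shows "0 < M U z" "M U z < 1"
  using M_attained[OF assms] phi_range by auto

lemma psi_eq:
  assumes "compact U" "U \<noteq> {}" "U \<subseteq> ball 0 1" "norm z = 1"
  shows "psi U z = z * circ (M U z)"
proof -
  define m where "m = M U z"
  define w0 where "w0 = z * circ m"
  obtain p0 where p0: "p0 \<in> U" "m = phi z p0" "\<forall>p'\<in>U. phi z p0 \<le> phi z p'"
    using M_attained[OF assms] unfolding m_def by blast
  have m01: "0 < m" "m < 1" using M_range[OF assms] unfolding m_def by auto
  have zz: "cnj z * z = 1" using cnj_z_z[OF assms(4)] .
  have z0: "z \<noteq> 0" using assms(4) by auto
  have p0b: "norm p0 < 1" using p0(1) assms(3) by auto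
  have Kz: "\<And>p \<theta>. p \<in> U \<Longrightarrow> 0 < \<theta> \<Longrightarrow> \<theta> < 1 \<Longrightarrow>
      (Im (cnj (z * circ \<theta> - z) * (p - z)) \<ge> 0 \<longleftrightarrow> \<theta> \<le> phi z p) \<and>
      (Im (cnj (z * circ \<theta> - z) * (p - z)) = 0 \<longleftrightarrow> \<theta> = phi z p)"
    using K assms(3,4) by auto
  have e: "z * circ (M U z) = w0" unfolding w0_def m_def ..
  show ?thesis unfolding psi_def e
  proof (rule the_equality, intro conjI)
    show "w0 \<in> sphere 0 1" unfolding w0_def using assms(4) by (simp add: norm_mult)
    show "w0 \<noteq> z"
    proof
      assume "w0 = z"
      then have "z * circ m = z * 1" unfolding w0_def by simp
      then have "circ m = 1" using z0 by simp
      then show False using circ_ne_1 m01 by blast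
    qed
    then have nz: "w0 - z \<noteq> 0" by simp
    have "Im (cnj (w0 - z) * (p0 - z)) = 0" using Kz[OF p0(1) m01] p0(2) unfolding w0_def by blast
    then obtain r where "p0 - z = of_real r * (w0 - z)" using on_line[OF nz] by blast
    then have "p0 \<in> line_through z w0" unfolding line_through_def
      by (auto intro!: exI[of _ r] simp: algebra_simps)
    then show "line_through z w0 \<inter> U \<noteq> {}" using p0(1) by blast
    show "\<forall>p\<in>U. left_of z w0 p"
    proof
      fix p assume p: "p \<in> U"
      have "m \<le> phi z p" using p0 p by auto
      then show "left_of z w0 p" unfolding left_of_def w0_def using Kz[OF p m01] by blast
    qed
  next
    fix w assume w: "w \<in> sphere 0 1 \<and> w \<noteq> z \<and> line_through z w \<inter> U \<noteq> {} \<and> (\<forall>p\<in>U. left_of z w p)"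
    have "norm (cnj z * w) = 1" using w assms(4) by (simp add: norm_mult)
    then obtain \<theta> where th: "0 \<le> \<theta>" "\<theta> < 1" "cnj z * w = circ \<theta>" using unit_circ by blast
    have wz: "w = z * circ \<theta>" using th(3) zz
      by (metis mult.assoc mult.commute mult.left_neutral)
    have "\<theta> \<noteq> 0" using w wz by (auto simp: circ_def)
    then have th0: "0 < \<theta>" using th by simp
    obtain p1 where p1: "p1 \<in> U" "p1 \<in> line_through z w" using w by blast
    then obtain r where "p1 = z + of_real r * (w - z)" unfolding line_through_def by blast
    then have "p1 - z = of_real r * (w - z)" by simp
    then have "Im (cnj (w - z) * (p1 - z)) = 0" by (simp only: Im_line)
    then have "\<theta> = phi z p1" using Kz[OF p1(1) th0 th(2)] wz by blast
    then have le1: "m \<le> \<theta>" using p0 p1 by auto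
    have "left_of z w p0" using w p0(1) by blast
    then have "\<theta> \<le> phi z p0" unfolding left_of_def using Kz[OF p0(1) th0 th(2)] wz by blast
    then have "\<theta> = m" using le1 p0(2) by simp
    then show "w = w0" using wz w0_def by simp
  qed
qed

lemma M_cont:
  assumes "compact U" "U \<noteq> {}" "U \<subseteq> ball 0 1"
  shows "continuous_on (sphere 0 1) (M U)"
proof -
  define KK where "KK = (\<lambda>x. cnj (fst x) * snd x) ` (sphere 0 1 \<times> U)"
  have "compact (sphere (0::complex) 1 \<times> U)" using assms(1) by (intro compact_Times) auto
  moreover have "continuous_on (sphere 0 1 \<times> U) (\<lambda>x::complex\<times>complex. cnj (fst x) * snd x)"
    by (intro continuous_intros)
  ultimately have cK: "compact KK" unfolding KK_def by (rule compact_continuous_image[rotated])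
  have KKb: "KK \<subseteq> ball 0 1" unfolding KK_def using assms(3) by (auto simp: norm_mult)
  have uc: "uniformly_continuous_on KK Phi"
    by (rule compact_uniformly_continuous[OF continuous_on_subset[OF continuous_on_Phi KKb] cK])
  show ?thesis unfolding continuous_on_iff
  proof (intro ballI allI impI)
    fix z0 :: complex and e :: real assume z0: "z0 \<in> sphere 0 1" and e: "0 < e"
    obtain d where d: "d > 0" "\<forall>x\<in>KK. \<forall>x'\<in>KK. dist x' x < d \<longrightarrow> dist (Phi x') (Phi x) < e/2"
      using uc e unfolding uniformly_continuous_on_def by (meson half_gt_zero)
    have close: "\<bar>phi z p - phi z0 p\<bar> < e/2" if z: "z \<in> sphere 0 1" "dist z z0 < d" and p: "p \<in> U" for z p
    proof -
      have k1: "cnj z * p \<in> KK" unfolding KK_def using z p by force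
      have k2: "cnj z0 * p \<in> KK" unfolding KK_def using z0 p by force
      have "norm p \<le> 1" using p assms(3) by auto
      have "dist (cnj z * p) (cnj z0 * p) = norm (cnj (z - z0)) * norm p"
        by (simp add: dist_norm norm_mult[symmetric] algebra_simps)
      also have "\<dots> \<le> norm (z - z0)" using \<open>norm p \<le> 1\<close> by (metis complex_mod_cnj mult_left_le norm_ge_zero)
      also have "\<dots> < d" using z(2) by (simp add: dist_norm)
      finally have "dist (Phi (cnj z * p)) (Phi (cnj z0 * p)) < e/2" using d(2) k1 k2 by blast
      then show ?thesis by (simp add: phi_def dist_real_def)
    qed
    show "\<exists>d>0. \<forall>x'\<in>sphere 0 1. dist x' z0 < d \<longrightarrow> dist (M U x') (M U z0) < e"
    proof (intro exI[of _ d] conjI ballI impI)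
      show "d > 0" by fact
      fix z assume z: "z \<in> sphere 0 1" "dist z z0 < d"
      have nz: "norm z = 1" "norm z0 = 1" using z z0 by auto
      obtain p0 where p0: "p0 \<in> U" "M U z0 = phi z0 p0" using M_attained[OF assms nz(2)] by blast
      obtain p1 where p1: "p1 \<in> U" "M U z = phi z p1" using M_attained[OF assms nz(1)] by blast
      have "M U z \<le> phi z p0" using M_le[OF assms nz(1) p0(1)] .
      moreover have "M U z0 \<le> phi z0 p1" using M_le[OF assms nz(2) p1(1)] .
      moreover have "\<bar>phi z p0 - phi z0 p0\<bar> < e/2" "\<bar>phi z p1 - phi z0 p1\<bar> < e/2"
        using close[OF z] p0 p1 by auto
      ultimately show "dist (M U z) (M U z0) < e" using p0(2) p1(2) unfolding dist_real_def abs_less_iff by linarith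
    qed
  qed
qed




definition FU :: "complex set \<Rightarrow> real \<Rightarrow> real" where
  "FU U t = t + M U (circ t)"

locale goodU =
  fixes U :: "complex set"
  assumes cU: "compact U" and neU: "U \<noteq> {}" and bU: "U \<subseteq> ball 0 1"
begin

lemma FU_psi: "psi U (circ t) = circ (FU U t)"
  unfolding FU_def using psi_eq[OF cU neU bU norm_circ] by (simp add: circ_add)

lemma FU_cont: "continuous_on UNIV (FU U)"
proof -
  have "circ ` UNIV \<subseteq> sphere 0 1" by auto
  then have "continuous_on UNIV (\<lambda>t. M U (circ t))"
    using continuous_on_compose2[OF M_cont[OF cU neU bU] continuous_circ] by blast
  then show ?thesis unfolding FU_def by (intro continuous_intros)
qed

lemma FU_per: "FU U (t + 1) = FU U t + 1"
  unfolding FU_def by (simp add: circ_per)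

lemma FU_le_Fp: "p \<in> U \<Longrightarrow> FU U t \<le> Fp p t"
  unfolding FU_def Fp_def using M_le[OF cU neU bU norm_circ] by auto

lemma FU_range: "t < FU U t" "FU U t < t + 1"
  unfolding FU_def using M_range[OF cU neU bU norm_circ] by auto

lemma FU_mono: "strict_mono (FU U)"
proof (rule strict_monoI)
  fix a b :: real assume ab: "a < b"
  obtain p where p: "p \<in> U" "M U (circ b) = phi (circ b) p"
    using M_attained[OF cU neU bU norm_circ] by blast
  have pb: "norm p < 1" using p bU by auto
  have "FU U b = Fp p b" unfolding FU_def Fp_def using p by simp
  moreover have "Fp p a < Fp p b" using Fp_mono[OF pb] ab by (simp add: strict_mono_less)
  moreover have "FU U a \<le> Fp p a" using FU_le_Fp[OF p(1)] .
  ultimately show "FU U a < FU U b" by linarith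
qed

lemma FU_inv_le: "FU U (FU U t) \<le> t + 1"
proof -
  obtain p where p: "p \<in> U" using neU by blast
  have pb: "norm p < 1" using p bU by auto
  have "FU U (FU U t) \<le> Fp p (FU U t)" using FU_le_Fp[OF p] .
  also have "\<dots> \<le> Fp p (Fp p t)" using Fp_mono[OF pb] FU_le_Fp[OF p, of t]
    by (simp add: strict_mono_less_eq)
  also have "\<dots> = t + 1" using Fp_inv[OF pb] .
  finally show ?thesis .
qed

lemma lift_eq: "lift_of (psi U) = FU U"
  unfolding lift_of_def
proof (rule the_equality, intro conjI)
  show "continuous_on UNIV (FU U)" by (rule FU_cont)
  show "\<forall>t. psi U (circ t) = circ (FU U t)" using FU_psi by blast
  show "0 \<le> FU U 0" "FU U 0 < 1" using FU_range[of 0] by auto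
next
  fix G assume G: "continuous_on UNIV G \<and> (\<forall>t. psi U (circ t) = circ (G t)) \<and> 0 \<le> G 0 \<and> G 0 < 1"
  define h where "h t = G t - FU U t" for t
  have hint: "\<exists>k::int. h t = k" for t
  proof -
    have "circ (G t) = circ (FU U t)" using G FU_psi by metis
    then obtain k :: int where "G t = FU U t + k" using circ_eq_int by blast
    then show ?thesis unfolding h_def by auto
  qed
  have hc: "continuous_on UNIV h" unfolding h_def using G FU_cont by (intro continuous_intros) auto
  have "h constant_on UNIV"
  proof (rule continuous_discrete_range_constant[OF connected_UNIV hc])
    fix x :: real
    show "\<exists>e>0. \<forall>y. y \<in> UNIV \<and> h y \<noteq> h x \<longrightarrow> e \<le> norm (h y - h x)"
    proof (intro exI[of _ 1] conjI allI impI)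
      fix y assume "y \<in> UNIV \<and> h y \<noteq> h x"
      moreover obtain k1 :: int where "h y = k1" using hint by blast
      moreover obtain k2 :: int where "h x = k2" using hint by blast
      ultimately show "1 \<le> norm (h y - h x)" by auto
    qed simp
  qed
  then obtain c where c: "\<And>t. h t = c" unfolding constant_on_def by blast
  obtain k :: int where k: "h 0 = k" using hint by blast
  have "-1 < h 0" "h 0 < 1" unfolding h_def using G FU_range[of 0] by auto
  then have "k = 0" using k by auto
  then have "c = 0" using c[of 0] k by simp
  then have "\<And>t. h t = 0" using c by simp
  then show "G = FU U" unfolding h_def by (auto simp: fun_eq_iff)
qed

lemma psi_cont: "continuous_on (sphere 0 1) (psi U)"
proof -
  have "continuous_on (sphere 0 1) (\<lambda>z. z * circ (M U z))"
    using continuous_on_compose2[OF continuous_circ M_cont[OF cU neU bU]]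
    by (intro continuous_intros) auto
  then show ?thesis
    by (rule continuous_on_cong[THEN iffD1, rotated 2]) (auto simp: psi_eq[OF cU neU bU])
qed

lemma sphere_circ: "z \<in> sphere 0 1 \<Longrightarrow> \<exists>t. 0 \<le> t \<and> t < 1 \<and> z = circ t"
  using unit_circ by auto

lemma psi_image: "psi U ` sphere 0 1 = sphere 0 1"
proof
  show "psi U ` sphere 0 1 \<subseteq> sphere 0 1"
  proof
    fix w assume "w \<in> psi U ` sphere 0 1"
    then obtain z where z: "z \<in> sphere 0 1" "w = psi U z" by blast
    then obtain t where "z = circ t" using sphere_circ by blast
    then show "w \<in> sphere 0 1" using z FU_psi by simp
  qed
  show "sphere 0 1 \<subseteq> psi U ` sphere 0 1"
  proof
    fix w assume "w \<in> (sphere 0 1 :: complex set)"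
    then obtain s where s: "0 \<le> s" "s < 1" "w = circ s" using sphere_circ by blast
    define s' where "s' = (if FU U 0 \<le> s then s else s + 1)"
    have cs: "circ s' = w" unfolding s'_def using s circ_per by auto
    have "FU U 0 \<le> s'" "s' \<le> FU U 1" unfolding s'_def using FU_per[of 0] FU_range[of 0] s by auto
    then obtain x where "0 \<le> x" "x \<le> 1" "FU U x = s'"
      using IVT'[of "FU U" 0 s' 1] continuous_on_subset[OF FU_cont] by auto
    then have "psi U (circ x) = w" using FU_psi cs by simp
    moreover have "circ x \<in> sphere 0 1" by simp
    ultimately show "w \<in> psi U ` sphere 0 1" by (metis image_eqI)
  qed
qed

lemma psi_inj: "inj_on (psi U) (sphere 0 1)"
proof (rule inj_onI)
  fix z1 z2 assume z: "z1 \<in> sphere 0 1" "z2 \<in> sphere 0 1" "psi U z1 = psi U z2"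
  obtain t1 where t1: "0 \<le> t1" "t1 < 1" "z1 = circ t1" using sphere_circ z(1) by blast
  obtain t2 where t2: "0 \<le> t2" "t2 < 1" "z2 = circ t2" using sphere_circ z(2) by blast
  have "circ (FU U t1) = circ (FU U t2)" using z(3) t1 t2 FU_psi by simp
  then obtain k :: int where k: "FU U t1 = FU U t2 + k" using circ_eq_int by blast
  have m: "\<And>a b. a \<le> b \<Longrightarrow> FU U a \<le> FU U b" "\<And>a b. a < b \<Longrightarrow> FU U a < FU U b"
    using FU_mono by (auto simp: strict_mono_less_eq strict_mono_less)
  have "FU U 0 \<le> FU U t1" "FU U t1 < FU U 1" "FU U 0 \<le> FU U t2" "FU U t2 < FU U 1"
    using m t1 t2 by auto
  moreover have "FU U 1 = FU U 0 + 1" using FU_per[of 0] by simp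
  ultimately have "k = 0" using k by auto
  then have "FU U t1 = FU U t2" using k by simp
  then have "t1 = t2" using FU_mono by (metis strict_mono_eq)
  then show "z1 = z2" using t1 t2 by simp
qed

lemma orient: "orient_pres_homeo (psi U)"
  unfolding orient_pres_homeo_def
proof (intro conjI)
  show "\<exists>g. homeomorphism (sphere 0 1) (sphere 0 1) (psi U) g"
    by (rule homeomorphism_compact[OF compact_sphere psi_cont psi_image psi_inj])
  show "\<exists>F. continuous_on UNIV F \<and> strict_mono F \<and> (\<forall>t. F (t + 1) = F t + 1) \<and> (\<forall>t. psi U (circ t) = circ (F t))"
    using FU_cont FU_mono FU_per FU_psi by blast
qed

end

lemma FU_sub: assumes "goodU U" "goodU V" "V \<subseteq> U" shows "FU U t \<le> FU V t"
proof -
  interpret U: goodU U by fact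
  interpret V: goodU V by fact
  obtain p where p: "p \<in> V" "M V (circ t) = phi (circ t) p"
    using M_attained[OF V.cU V.neU V.bU norm_circ] by blast
  have "M U (circ t) \<le> phi (circ t) p" using M_le[OF U.cU U.neU U.bU norm_circ] p assms(3) by auto
  then show ?thesis unfolding FU_def using p by simp
qed




locale liftF =
  fixes F :: "real \<Rightarrow> real"
  assumes monoF: "\<And>a b. a \<le> b \<Longrightarrow> F a \<le> F b"
    and perF: "\<And>t. F (t + 1) = F t + 1"
begin

lemma pow_mono: "a \<le> b \<Longrightarrow> (F^^n) a \<le> (F^^n) b"
proof (induction n)
  case 0 then show ?case by simp
next
  case (Suc n) then show ?case using monoF by simp
qed

lemma pow_per: "(F^^n) (x + 1) = (F^^n) x + 1"
proof (induction n)
  case 0 then show ?case by simp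
next
  case (Suc n) then show ?case using perF by simp
qed

lemma pow_per_nat: "(F^^n) (x + real m) = (F^^n) x + real m"
proof (induction m arbitrary: x)
  case 0 then show ?case by simp
next
  case (Suc m)
  have "x + real (Suc m) = (x + real m) + 1" by simp
  then have "(F^^n) (x + real (Suc m)) = (F^^n) ((x + real m) + 1)" by (rule arg_cong)
  also have "\<dots> = (F^^n) (x + real m) + 1" by (rule pow_per)
  also have "\<dots> = (F^^n) x + real m + 1" by (simp only: Suc.IH)
  finally show ?case by simp
qed

lemma pow_per_int: "(F^^n) (x + of_int j) = (F^^n) x + of_int j"
proof (cases "j \<ge> 0")
  case True
  then have e: "of_int j = real (nat j)" by simp
  show ?thesis unfolding e by (rule pow_per_nat)
next
  case False
  define j' where "j' = nat (-j)"
  have e: "of_int j = - real j'" using False unfolding j'_def by simp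
  have "(F^^n) ((x + of_int j) + real j') = (F^^n) (x + of_int j) + real j'" by (rule pow_per_nat)
  moreover have "(x + of_int j) + real j' = x" using e by simp
  ultimately have "(F^^n) x = (F^^n) (x + of_int j) + real j'" by simp
  then show ?thesis using e by linarith
qed

lemma disp_bound: "\<bar>(F^^n) x - x - (F^^n) 0\<bar> \<le> 1"
proof -
  define y where "y = x - of_int (floor x)"
  have y: "0 \<le> y" "y < 1" unfolding y_def by linarith+
  have "(F^^n) x = (F^^n) (y + of_int (floor x))" unfolding y_def by simp
  also have "\<dots> = (F^^n) y + of_int (floor x)" by (rule pow_per_int)
  finally have e: "(F^^n) x - x = (F^^n) y - y" unfolding y_def by simp
  have "(F^^n) 0 \<le> (F^^n) y" "(F^^n) y \<le> (F^^n) (0 + 1)" using y pow_mono by auto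
  then show ?thesis using e y pow_per[of n 0] by auto
qed

definition a :: "nat \<Rightarrow> real" where "a n = (F^^n) 0"

lemma a_mult: "\<bar>a (k * n) - real k * a n\<bar> \<le> real k"
proof (induction k)
  case 0 then show ?case by (simp add: a_def)
next
  case (Suc k)
  have "a (Suc k * n) = (F^^n) (a (k * n))" unfolding a_def by (simp add: funpow_add)
  moreover have "\<bar>(F^^n) (a (k * n)) - a (k * n) - a n\<bar> \<le> 1" unfolding a_def by (rule disp_bound)
  ultimately show ?case using Suc by (simp add: algebra_simps)
qed

lemma div_bound:
  assumes "\<bar>X - real m * Y\<bar> \<le> real m" "m \<ge> 1" "n \<ge> 1"
  shows "\<bar>X / (real m * real n) - Y / real n\<bar> \<le> 1 / real n"
proof -
  have mn: "real m > 0" "real n > 0" using assms by auto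
  have "X / (real m * real n) - Y / real n = (X - real m * Y) / (real m * real n)"
    using mn by (simp add: field_simps)
  then have "\<bar>X / (real m * real n) - Y / real n\<bar> = \<bar>X - real m * Y\<bar> / (real m * real n)"
    using mn by simp
  also have "\<dots> \<le> real m / (real m * real n)" using assms(1) mn by (intro divide_right_mono) auto
  also have "\<dots> = 1 / real n" using mn by simp
  finally show ?thesis .
qed

lemma a_cauchy:
  assumes "m \<ge> 1" "n \<ge> 1"
  shows "\<bar>a m / real m - a n / real n\<bar> \<le> 1 / real m + 1 / real n"
proof -
  have A: "\<bar>a (m * n) / (real m * real n) - a n / real n\<bar> \<le> 1 / real n"
    using div_bound[OF a_mult assms] .
  have "\<bar>a (n * m) / (real n * real m) - a m / real m\<bar> \<le> 1 / real m"
    using div_bound[OF a_mult assms(2,1)] .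
  then have B: "\<bar>a (m * n) / (real m * real n) - a m / real m\<bar> \<le> 1 / real m"
    by (simp add: mult.commute)
  show ?thesis using A B by linarith
qed

lemma rot_conv: "convergent (\<lambda>n. ((F^^n) 0 - 0) / real n)"
proof -
  have "Cauchy (\<lambda>n. a n / real n)"
  proof (rule CauchyI)
    fix e :: real assume e: "0 < e"
    obtain N :: nat where N: "2 / e < real N" using reals_Archimedean2 by blast
    have "0 < 2 / e" using e by simp
    then have "0 < real N" using N by linarith
    then have N1: "N \<ge> 1" by simp
    have Ne: "2 / real N < e" using N e N1 by (simp add: field_simps)
    show "\<exists>M. \<forall>m\<ge>M. \<forall>n\<ge>M. norm (a m / real m - a n / real n) < e"
    proof (intro exI[of _ N] allI impI)
      fix m n assume mn: "N \<le> m" "N \<le> n"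
      have "1 / real m \<le> 1 / real N" "1 / real n \<le> 1 / real N" using mn N1
        by (auto intro!: divide_left_mono)
      then have "1 / real m + 1 / real n \<le> 2 / real N" by simp
      then show "norm (a m / real m - a n / real n) < e"
        using a_cauchy[of m n] mn N1 Ne by simp
    qed
  qed
  then show ?thesis unfolding a_def Cauchy_convergent_iff by simp
qed

end

lemma rot_le:
  assumes "liftF F" "liftF G" "\<And>t. F t \<le> G t"
  shows "lim (\<lambda>n. ((F^^n) 0 - 0) / real n) \<le> lim (\<lambda>n. ((G^^n) 0 - 0) / real n)"
proof -
  interpret F: liftF F by fact
  interpret G: liftF G by fact
  have le: "(F^^n) 0 \<le> (G^^n) 0" for n
  proof (induction n)
    case 0 then show ?case by simp
  next
    case (Suc n)
    have "F ((F^^n) 0) \<le> F ((G^^n) 0)" by (rule F.monoF[OF Suc.IH])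
    also have "\<dots> \<le> G ((G^^n) 0)" using assms(3) .
    finally show ?case by simp
  qed
  show ?thesis
  proof (rule LIMSEQ_le)
    show "(\<lambda>n. ((F^^n) 0 - 0) / real n) \<longlonglongrightarrow> lim (\<lambda>n. ((F^^n) 0 - 0) / real n)"
      using F.rot_conv convergent_LIMSEQ_iff by blast
    show "(\<lambda>n. ((G^^n) 0 - 0) / real n) \<longlonglongrightarrow> lim (\<lambda>n. ((G^^n) 0 - 0) / real n)"
      using G.rot_conv convergent_LIMSEQ_iff by blast
    show "\<exists>N. \<forall>n\<ge>N. ((F^^n) 0 - 0) / real n \<le> ((G^^n) 0 - 0) / real n"
      using le by (auto intro!: divide_right_mono)
  qed
qed

lemma rot_half:
  assumes "liftF F" "\<And>t. F (F t) \<le> t + 1" "F 0 < 1"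
  shows "lim (\<lambda>n. ((F^^n) 0 - 0) / real n) \<le> 1 / 2"
proof -
  interpret F: liftF F by fact
  have even: "(F^^(2*n)) 0 \<le> real n" for n
  proof (induction n)
    case 0 then show ?case by simp
  next
    case (Suc n)
    have "2 * Suc n = Suc (Suc (2 * n))" by simp
    then have "(F^^(2 * Suc n)) 0 = F (F ((F^^(2*n)) 0))" by (simp only: funpow.simps o_apply)
    also have "\<dots> \<le> (F^^(2*n)) 0 + 1" by (rule assms(2))
    finally show ?case using Suc.IH by simp
  qed
  have Fn: "F (real n) = F 0 + real n" for n
  proof -
    have "(F^^1) (0 + real n) = (F^^1) 0 + real n" by (rule F.pow_per_nat)
    then show ?thesis by simp
  qed
  have bound: "(F^^k) 0 \<le> real k / 2 + 1" for k
  proof (cases "even k")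
    case True
    then obtain n where kn: "k = 2 * n" by (rule evenE)
    have "(F^^k) 0 \<le> real n" unfolding kn by (rule even)
    then show ?thesis using kn by simp
  next
    case False
    then obtain n where k0: "k = 2 * n + 1" by (rule oddE)
    then have k: "k = Suc (2 * n)" by simp
    have "(F^^k) 0 = F ((F^^(2*n)) 0)" using k by simp
    also have "\<dots> \<le> F (real n)" by (rule F.monoF[OF even])
    also have "\<dots> < real n + 1" using Fn assms(3) by simp
    finally have "(F^^k) 0 < real n + 1" .
    moreover have "real k = 2 * real n + 1" using k by simp
    ultimately show ?thesis by linarith
  qed
  show ?thesis
  proof (rule LIMSEQ_le)
    show "(\<lambda>n. ((F^^n) 0 - 0) / real n) \<longlonglongrightarrow> lim (\<lambda>n. ((F^^n) 0 - 0) / real n)"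
      using F.rot_conv convergent_LIMSEQ_iff by blast
    show "(\<lambda>n. 1/2 + inverse (real n)) \<longlonglongrightarrow> 1/2"
      using tendsto_add[OF tendsto_const lim_inverse_n, of "1/2::real"] by simp
    show "\<exists>N. \<forall>n\<ge>N. ((F^^n) 0 - 0) / real n \<le> 1/2 + inverse (real n)"
    proof (intro exI[of _ 1] allI impI)
      fix n :: nat assume n: "1 \<le> n"
      have "(F^^n) 0 / real n \<le> (real n / 2 + 1) / real n"
        using bound[of n] n by (intro divide_right_mono) auto
      also have "\<dots> = 1/2 + inverse (real n)" using n by (simp add: field_simps)
      finally show "((F^^n) 0 - 0) / real n \<le> 1/2 + inverse (real n)" by simp
    qed
  qed
qed


theorem lemma2p6:
  fixes U :: "complex set"
  assumes "closed U" and "convex U" and "U \<noteq> {}" and "U \<subseteq> ball 0 1"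
  shows "orient_pres_homeo (psi U) \<and>
         (\<forall>V. closed V \<and> convex V \<and> V \<noteq> {} \<and> V \<subseteq> U \<longrightarrow>
             rot_num (psi U) \<le> rot_num (psi V)) \<and>
         rot_num (psi U) \<le> 1 / 2"
proof -
  have "bounded U" using assms(4) bounded_subset bounded_ball by blast
  then have cU: "compact U" using assms(1) compact_eq_bounded_closed by blast
  have gU: "goodU U" using cU assms(3,4) by unfold_locales
  interpret U: goodU U by (rule gU)
  have LU: "liftF (FU U)"
  proof
    show "\<And>a b. a \<le> b \<Longrightarrow> FU U a \<le> FU U b" using U.FU_mono by (simp add: strict_mono_less_eq)
    show "\<And>t. FU U (t + 1) = FU U t + 1" by (rule U.FU_per)
  qed
  have P1: "orient_pres_homeo (psi U)" by (rule U.orient)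
  have P2: "rot_num (psi U) \<le> rot_num (psi V)"
    if V: "closed V \<and> convex V \<and> V \<noteq> {} \<and> V \<subseteq> U" for V
  proof -
    have "bounded V" using V \<open>bounded U\<close> bounded_subset by blast
    then have cV: "compact V" using V compact_eq_bounded_closed by blast
    have gV: "goodU V" using cV V assms(4) by unfold_locales auto
    interpret V: goodU V by (rule gV)
    have LV: "liftF (FU V)"
    proof
      show "\<And>a b. a \<le> b \<Longrightarrow> FU V a \<le> FU V b" using V.FU_mono by (simp add: strict_mono_less_eq)
      show "\<And>t. FU V (t + 1) = FU V t + 1" by (rule V.FU_per)
    qed
    show ?thesis unfolding rot_num_def U.lift_eq V.lift_eq
      by (rule rot_le[OF LU LV FU_sub[OF gU gV]]) (use V in auto)
  qed
  have P3: "rot_num (psi U) \<le> 1 / 2" unfolding rot_num_def U.lift_eq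
    by (rule rot_half[OF LU U.FU_inv_le]) (use U.FU_range[of 0] in auto)
  show ?thesis using P1 P2 P3 by blast
qed

end
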